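(* Assume $\Gamma=[U^{\sf T}\ X^{\sf T}]^{\sf T}$ has full row rank and $Z=AX+BU$. Let $\Delta=[\Delta_Z^{\sf T}\ \Delta_X^{\sf T}\ \Delta_U^{\sf T}]^{\sf T}$ be a perturbation, $(Z_\Delta,X_\Delta,U_\Delta)=(Z+\Delta_Z,X+\Delta_X,U+\Delta_U)$, $\Gamma_\Delta=[U_\Delta^{\sf T}\ X_\Delta^{\sf T}]^{\sf T}$, and let $(P_\Delta,K_\Delta,G_\Delta)$ be an optimal solution of the regularized problem (RP) posed with the perturbed data. Set $M_\Delta=G_\Delta P_\Delta G_\Delta^{\sf T}$. If $$\mu>\left(-1+\sqrt{1+\frac{1}{2\|Z\|_2^2\|M_\Delta\|_2}}\right)^{-1},$$ then $A+BK_\Delta$ is Schur stable, i.e. $\rho(A+BK_\Delta)<1$.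
   Context: $A\in\mathbb{R}^{n\times n}$, $B\in\mathbb{R}^{n\times m}$; data $Z,X\in\mathbb{R}^{n\times T}$, $U\in\mathbb{R}^{m\times T}$. $Q\in\mathbb{R}^{n\times n}$ symmetric positive semidefinite, $R\in\mathbb{R}^{m\times m}$ symmetric positive definite, $\gamma\ge0$. For data $(\tilde Z,\tilde X,\tilde U)$ with $\tilde\Gamma=[\tilde U^{\sf T}\ \tilde X^{\sf T}]^{\sf T}$ and $\tilde\Pi=I_T-\tilde\Gamma^\dagger\tilde\Gamma$, problem (RP) is: minimize over $P\in\mathbb{R}^{n\times n}$ symmetric, $K\in\mathbb{R}^{m\times n}$, $G\in\mathbb{R}^{T\times n}$ the cost ${\rm tr}(QP)+{\rm tr}(K^{\sf T}RKP)+\gamma\|\tilde\Pi G\|_F^2$ subject to $\tilde ZGPG^{\sf T}\tilde Z^{\sf T}-P+I_n\preceq0$, $P\succeq I_n$, and $[K^{\sf T}\ I_n]^{\sf T}=\tilde\Gamma G$. The signal-to-perturbation ratio is $\mu=\min\big(\|Z\|_2/\|\Delta_Z\|_2,\ \sigma_{\min}(\Gamma)/\|\Delta_\Gamma\|_2\big)$ with $\Delta_\Gamma=[\Delta_U^{\sf T}\ \Delta_X^{\sf T}]^{\sf T}$ (a ratio with zero denominator is $+\infty$). $\|\cdot\|_2$ is the spectral norm, $\sigma_{\min}$ the smallest singular value, $\rho$ the spectral radius. *)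

theory Defs
  imports "HOL-Analysis.Analysis" "HOL-Library.Extended_Real"
begin

text \<open>Matrices are HOL-Analysis matrices: a p x q real matrix is real^'q^'p.
  Dimensions n, m, T are the finite index types 'n, 'm, 't.
  Stacked block matrices [M1; M2] (M1 on top) are indexed by the sum type.\<close>

definition vstack :: "real^'q^'p1 \<Rightarrow> real^'q^'p2 \<Rightarrow> real^'q^('p1 + 'p2)" where
  "vstack M1 M2 = (\<chi> i. case i of Inl a \<Rightarrow> M1 $ a | Inr b \<Rightarrow> M2 $ b)"

definition spec_norm :: "real^'q^'p \<Rightarrow> real" where
  "spec_norm M = onorm (\<lambda>x. M *v x)"

text \<open>Frobenius norm; the HOL-Analysis norm on real^'q^'p is exactly it.\<close>
definition frob_norm :: "real^'q^'p \<Rightarrow> real" where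
  "frob_norm M = sqrt (\<Sum>i\<in>UNIV. \<Sum>j\<in>UNIV. (M $ i $ j)^2)"

definition real_eigenvalues :: "real^'n^'n \<Rightarrow> real set" where
  "real_eigenvalues M = {l. \<exists>v. v \<noteq> 0 \<and> M *v v = l *s v}"

text \<open>Smallest singular value of a p x q matrix: the square root of the smallest
  eigenvalue of M M^T if p \<le> q, resp. of M^T M if q < p (i.e. the min(p,q)-th
  singular value).\<close>
definition sigma_min :: "real^'q^'p \<Rightarrow> real" where
  "sigma_min M = (if CARD('p) \<le> CARD('q)
      then sqrt (Min (real_eigenvalues (M ** transpose M)))
      else sqrt (Min (real_eigenvalues (transpose M ** M))))"

definition complex_eigenvalues :: "real^'n^'n \<Rightarrow> complex set" where
  "complex_eigenvalues M =
     {l. \<exists>v::complex^'n. v \<noteq> 0 \<and> map_matrix complex_of_real M *v v = l *s v}"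

definition spectral_radius :: "real^'n^'n \<Rightarrow> real" where
  "spectral_radius M = Max (cmod ` complex_eigenvalues M)"

definition psd :: "real^'n^'n \<Rightarrow> bool" where
  "psd M \<longleftrightarrow> (\<forall>x. 0 \<le> x \<bullet> (M *v x))"

definition loewner_le :: "real^'n^'n \<Rightarrow> real^'n^'n \<Rightarrow> bool" where
  "loewner_le M N \<longleftrightarrow> psd (N - M)"

definition pos_def :: "real^'n^'n \<Rightarrow> bool" where
  "pos_def M \<longleftrightarrow> (\<forall>x. x \<noteq> 0 \<longrightarrow> 0 < x \<bullet> (M *v x))"

definition symmetric :: "real^'n^'n \<Rightarrow> bool" where
  "symmetric M \<longleftrightarrow> transpose M = M"

definition is_pinv :: "real^'q^'p \<Rightarrow> real^'p^'q \<Rightarrow> bool" where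
  "is_pinv M P \<longleftrightarrow> M ** P ** M = M \<and> P ** M ** P = P \<and>
     transpose (M ** P) = M ** P \<and> transpose (P ** M) = P ** M"

definition pinv :: "real^'q^'p \<Rightarrow> real^'p^'q" where
  "pinv M = (THE P. is_pinv M P)"

definition Pi_proj :: "real^'t^'n \<Rightarrow> real^'t^'m \<Rightarrow> real^'t^'t" where
  "Pi_proj Xt Ut = (let Gam = vstack Ut Xt in mat 1 - pinv Gam ** Gam)"

definition RP_cost ::
  "real^'n^'n \<Rightarrow> real^'m^'m \<Rightarrow> real \<Rightarrow> real^'t^'n \<Rightarrow> real^'t^'m \<Rightarrow>
   real^'n^'n \<Rightarrow> real^'n^'m \<Rightarrow> real^'n^'t \<Rightarrow> real" where
  "RP_cost Q R \<gamma> Xt Ut P K G =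
     trace (Q ** P) + trace (transpose K ** R ** K ** P)
     + \<gamma> * (frob_norm (Pi_proj Xt Ut ** G))^2"

definition RP_feasible ::
  "real^'t^'n \<Rightarrow> real^'t^'n \<Rightarrow> real^'t^'m \<Rightarrow>
   real^'n^'n \<Rightarrow> real^'n^'m \<Rightarrow> real^'n^'t \<Rightarrow> bool" where
  "RP_feasible Zt Xt Ut P K G \<longleftrightarrow>
     symmetric P \<and>
     loewner_le (Zt ** G ** P ** transpose G ** transpose Zt - P + mat 1) 0 \<and>
     loewner_le (mat 1) P \<and>
     vstack K (mat 1) = vstack Ut Xt ** G"

definition RP_optimal ::
  "real^'n^'n \<Rightarrow> real^'m^'m \<Rightarrow> real \<Rightarrow> real^'t^'n \<Rightarrow> real^'t^'n \<Rightarrow> real^'t^'m \<Rightarrow>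
   real^'n^'n \<Rightarrow> real^'n^'m \<Rightarrow> real^'n^'t \<Rightarrow> bool" where
  "RP_optimal Q R \<gamma> Zt Xt Ut P K G \<longleftrightarrow>
     RP_feasible Zt Xt Ut P K G \<and>
     (\<forall>P' K' G'. RP_feasible Zt Xt Ut P' K' G' \<longrightarrow>
        RP_cost Q R \<gamma> Xt Ut P K G \<le> RP_cost Q R \<gamma> Xt Ut P' K' G')"

definition eratio :: "real \<Rightarrow> real \<Rightarrow> ereal" where
  "eratio a b = (if b = 0 then \<infinity> else ereal (a / b))"

definition SPR :: "real^'t^'n \<Rightarrow> real^'t^'n \<Rightarrow> real^'t^'m \<Rightarrow>
    real^'t^'n \<Rightarrow> real^'t^'n \<Rightarrow> real^'t^'m \<Rightarrow> ereal" where
  "SPR Z X U DZ DX DU =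
     min (eratio (spec_norm Z) (spec_norm DZ))
         (eratio (sigma_min (vstack U X)) (spec_norm (vstack DU DX)))"

end

theory Submission
  imports Defs "HOL-Computational_Algebra.Fundamental_Theorem_Algebra"
begin


lemma det_zero_iff_ker:
  fixes N :: "'a::field^'n^'n"
  shows "det N = 0 \<longleftrightarrow> (\<exists>v. v \<noteq> 0 \<and> N *v v = 0)"
  using invertible_det_nz[of N] invertible_left_inverse[of N] matrix_left_invertible_ker[of N]
  by blast

lemma charpoly_exists:
  fixes F :: "'a::field^'n^'n"
  shows "\<exists>p. (\<forall>l. det (mat l - F) = poly p l) \<and> coeff p CARD('n) = 1"
proof -
  define C :: "'a poly^'n^'n" where "C = (\<chi> i j. [: - F$i$j, if i = j then 1 else 0 :])"
  have ent: "\<And>l i j. mat l $ i $ j - F$i$j = poly (C$i$j) l"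
    unfolding C_def by (simp add: mat_def)
  have ev: "\<And>l. det (mat l - F) = poly (det C) l"
    unfolding det_def by (simp add: poly_sum poly_prod of_int_poly ent)
  have deg1: "\<And>i j. degree (C$i$j) \<le> (if i = j then 1 else 0)"
    unfolding C_def by auto
  let ?S = "{p. p permutes (UNIV :: 'n set)}"
  have idc: "coeff (\<Prod>i\<in>UNIV. C$i$id i) CARD('n) = 1"
  proof -
    have m: "\<And>i. degree (C$i$i) = 1" "\<And>i. lead_coeff (C$i$i) = 1" unfolding C_def by (auto simp: degree_pCons_eq)
    have "degree (\<Prod>i\<in>UNIV. C$i$i) = (\<Sum>i\<in>UNIV. degree (C$i$i))"
      by (rule degree_prod_eq_sum_degree) (metis m(1) degree_0 zero_neq_one)
    also have "\<dots> = CARD('n)" using m by simp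
    finally have d: "degree (\<Prod>i\<in>UNIV. C$i$i) = CARD('n)" .
    have "lead_coeff (\<Prod>i\<in>UNIV. C$i$i) = 1"
      unfolding lead_coeff_prod m(2) by simp
    then show ?thesis using d by simp
  qed
  have oc: "coeff (\<Prod>i\<in>UNIV. C$i$p i) CARD('n) = 0" if "p \<in> ?S - {id}" for p
  proof -
    from that obtain k where k: "p k \<noteq> k" by (auto simp: fun_eq_iff)
    have "degree (\<Prod>i\<in>UNIV. C$i$p i) \<le> (\<Sum>i\<in>UNIV. degree (C$i$p i))"
      using degree_prod_sum_le[of UNIV "\<lambda>i. C$i$p i"] by simp
    also have "\<dots> \<le> (\<Sum>i\<in>UNIV. if i = k then 0 else 1)"
    proof (rule sum_mono)
      fix i :: 'n
      show "degree (C$i$p i) \<le> (if i = k then 0 else 1)"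
        using deg1[of i "p i"] k by (cases "i = p i"; cases "i = k"; simp)
    qed
    also have "\<dots> = CARD('n) - 1"
      by (simp add: sum.If_cases Compl_eq_Diff_UNIV card_Diff_singleton)
    also have "\<dots> < CARD('n)" by (simp add: card_gt_0_iff)
    finally show ?thesis by (simp add: coeff_eq_0)
  qed
  have "coeff (det C) CARD('n) = (\<Sum>p\<in>?S. of_int (sign p) * coeff (\<Prod>i\<in>UNIV. C$i$p i) CARD('n))"
    unfolding det_def coeff_sum by (simp add: of_int_poly coeff_mult)
  also have "\<dots> = of_int (sign (id::'n\<Rightarrow>'n)) * coeff (\<Prod>i\<in>UNIV. C$i$id i) CARD('n)
       + (\<Sum>p\<in>?S - {id}. of_int (sign p) * coeff (\<Prod>i\<in>UNIV. C$i$p i) CARD('n))"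
    by (subst sum.remove[of _ id]) (auto simp: permutes_id)
  also have "\<dots> = 1" using idc oc by (simp add: sign_id)
  finally show ?thesis using ev by blast
qed

lemma mat_mul_vec: "mat l *v v = l *s (v::'a::semiring_1^'n)"
proof -
  have "\<And>i. (\<Sum>j\<in>UNIV. (if i = j then l else 0) * v $ j) = (\<Sum>j\<in>UNIV. if i = j then l * v$j else 0)"
    by (rule sum.cong) auto
  then show ?thesis by (simp add: vec_eq_iff matrix_vector_mult_def mat_def)
qed

lemma transpose_diff: "transpose (A - B) = transpose A - (transpose B :: 'a::ring_1^'n^'m)"
  by (simp add: transpose_def vec_eq_iff)

lemma transpose_add: "transpose (A + B) = transpose A + (transpose B :: 'a::semiring_1^'n^'m)"
  by (simp add: transpose_def vec_eq_iff)

lemma eig_ker: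
  fixes S :: "'a::field^'n^'n"
  shows "S *v v = l *s v \<longleftrightarrow> (mat l - S) *v v = 0"
  by (metis matrix_vector_mult_diff_rdistrib mat_mul_vec right_minus_eq)

lemma eig_det:
  fixes S :: "'a::field^'n^'n"
  shows "(\<exists>v. v \<noteq> 0 \<and> S *v v = l *s v) \<longleftrightarrow> det (mat l - S) = 0"
  by (simp add: eig_ker det_zero_iff_ker)

lemma eig_finite:
  fixes S :: "'a::field^'n^'n"
  shows "finite {l. \<exists>v. v \<noteq> 0 \<and> S *v v = l *s v}"
proof -
  obtain p where p: "\<And>l. det (mat l - S) = poly p l" "coeff p CARD('n) = 1"
    using charpoly_exists[of S] by blast
  have "p \<noteq> 0" using p(2) by auto
  then have "finite {l. poly p l = 0}" by (rule poly_roots_finite)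
  moreover have "{l. \<exists>v. v \<noteq> 0 \<and> S *v v = l *s v} \<subseteq> {l. poly p l = 0}"
  proof
    fix l assume "l \<in> {l. \<exists>v. v \<noteq> 0 \<and> S *v v = l *s v}"
    then show "l \<in> {l. poly p l = 0}" using eig_det[of S l] p(1) by simp
  qed
  ultimately show ?thesis by (rule finite_subset[rotated])
qed

lemma eig_exists:
  fixes S :: "complex^'n^'n"
  shows "\<exists>l v. v \<noteq> 0 \<and> S *v v = l *s v"
proof -
  obtain p where p: "\<And>l. det (mat l - S) = poly p l" "coeff p CARD('n) = 1"
    using charpoly_exists[of S] by blast
  have "CARD('n) \<le> degree p" using p(2) by (intro le_degree) auto
  then have "degree p \<noteq> 0" using zero_less_card_finite[where 'a='n] by linarith
  then have "\<not> constant (poly p)" by (simp add: constant_degree)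
  then obtain z where "poly p z = 0" using fundamental_theorem_of_algebra by blast
  then show ?thesis using eig_det p(1) by metis
qed

lemma eig_transpose:
  fixes S :: "'a::field^'n^'n"
  assumes "v \<noteq> 0" "S *v v = l *s v"
  shows "\<exists>w. w \<noteq> 0 \<and> transpose S *v w = l *s w"
proof -
  have "det (mat l - S) = 0" using eig_det assms by blast
  then have "det (mat l - transpose S) = 0"
    by (metis det_transpose transpose_diff transpose_mat)
  then show ?thesis using eig_det by blast
qed



lemma sym_dot:
  fixes T :: "real^'n^'n"
  assumes "transpose T = T"
  shows "y \<bullet> (T *v z) = z \<bullet> (T *v y)"
  by (metis assms dot_lmul_matrix inner_commute transpose_matrix_vector)

lemma quad_expand:
  fixes T :: "real^'n^'n"
  assumes "transpose T = T"
  shows "(y + t *\<^sub>R z) \<bullet> (T *v (y + t *\<^sub>R z)) = y \<bullet> (T *v y) + 2 * t * (z \<bullet> (T *v y)) + t^2 * (z \<bullet> (T *v z))"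
proof -
  have "T *v (y + t *\<^sub>R z) = T *v y + t *\<^sub>R (T *v z)"
    by (simp add: matrix_vector_right_distrib matrix_vector_mult_scaleR)
  then show ?thesis using sym_dot[OF assms, of y z]
    by (simp add: inner_add_left inner_add_right algebra_simps power2_eq_square)
qed

lemma psd_zero_ker:
  fixes T :: "real^'n^'n"
  assumes sym: "transpose T = T" and psd: "\<And>x. 0 \<le> x \<bullet> (T *v x)" and y: "y \<bullet> (T *v y) = 0"
  shows "T *v y = 0"
proof (rule ccontr)
  assume ne: "T *v y \<noteq> 0"
  define z where "z = T *v y"
  define a where "a = z \<bullet> z"
  define c where "c = z \<bullet> (T *v z)"
  have a: "a > 0" using ne unfolding a_def z_def by simp
  have c: "c \<ge> 0" using psd unfolding c_def by simp
  define t where "t = - a / (c + 1)"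
  have t: "t < 0" unfolding t_def using a c by simp
  have tc: "t * c = - a - t" unfolding t_def using c by (simp add: field_simps)
  have "0 \<le> (y + t *\<^sub>R z) \<bullet> (T *v (y + t *\<^sub>R z))" by (rule psd)
  also have "\<dots> = 2 * t * a + t^2 * c"
    using quad_expand[OF sym, of y t z] y unfolding a_def c_def z_def by simp
  also have "\<dots> = 2*t*a + t*(t*c)" by (simp add: power2_eq_square mult_ac)
  also have "\<dots> = t * (a - t)" by (subst tc) (simp add: algebra_simps)
  also have "\<dots> < 0" using t a by (intro mult_neg_pos) auto
  finally show False by simp
qed

lemma rayleigh:
  fixes S :: "real^'n^'n"
  assumes sym: "transpose S = S"
  shows "\<exists>r. r \<in> real_eigenvalues S \<and> (\<forall>y. r * (y \<bullet> y) \<le> y \<bullet> (S *v y))"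
proof -
  let ?f = "\<lambda>y. y \<bullet> (S *v y)"
  have cont: "continuous_on (sphere 0 1) ?f"
    by (intro continuous_intros linear_continuous_on matrix_vector_mul_bounded_linear)
  have ne: "sphere (0::real^'n) 1 \<noteq> {}"
    by (simp add: sphere_def) (metis norm_axis_1 dist_0_norm)
  obtain y0 where y0: "y0 \<in> sphere 0 1" and mn: "\<And>y. y \<in> sphere 0 1 \<Longrightarrow> ?f y0 \<le> ?f y"
    using continuous_attains_inf[OF compact_sphere ne cont] by blast
  define r where "r = ?f y0"
  have ge: "r * (y \<bullet> y) \<le> ?f y" for y
  proof (cases "y = 0")
    case True then show ?thesis by simp
  next
    case False
    define u where "u = (1 / norm y) *\<^sub>R y"
    have u: "u \<in> sphere 0 1" using False unfolding u_def by simp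
    have yu: "y = norm y *\<^sub>R u" using False unfolding u_def by simp
    have "?f y = (norm y)^2 * ?f u"
      by (subst (1 2) yu) (simp add: matrix_vector_mult_scaleR power2_eq_square)
    moreover have "y \<bullet> y = (norm y)^2" by (simp add: power2_norm_eq_inner)
    ultimately show ?thesis using mult_right_mono[OF mn[OF u] zero_le_power2[of "norm y"]] unfolding r_def
      by (metis mult.commute)
  qed
  define T where "T = S - mat r"
  have Tsym: "transpose T = T" unfolding T_def by (simp add: transpose_diff sym)
  have Tq: "x \<bullet> (T *v x) = ?f x - r * (x \<bullet> x)" for x
    unfolding T_def by (simp add: matrix_vector_mult_diff_rdistrib mat_mul_vec inner_diff_right scalar_mult_eq_scaleR)
  have "T *v y0 = 0"
  proof (rule psd_zero_ker[OF Tsym])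
    show "0 \<le> x \<bullet> (T *v x)" for x using ge[of x] Tq[of x] by simp
    have "y0 \<bullet> y0 = 1" using y0 by (simp add: dot_square_norm)
    then show "y0 \<bullet> (T *v y0) = 0" using Tq[of y0] unfolding r_def by simp
  qed
  then have "S *v y0 = r *s y0"
    unfolding T_def by (simp add: matrix_vector_mult_diff_rdistrib mat_mul_vec)
  moreover have "y0 \<noteq> 0" using y0 by auto
  ultimately have "r \<in> real_eigenvalues S" unfolding real_eigenvalues_def by blast
  then show ?thesis using ge by blast
qed



lemma sn_bound: "norm (M *v x) \<le> spec_norm M * norm (x::real^'q)"
  for M :: "real^'q^'p"
  unfolding spec_norm_def by (rule onorm) simp

lemma sn_nonneg: "0 \<le> spec_norm (M::real^'q^'p)"
  unfolding spec_norm_def by (rule onorm_pos_le) simp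

lemma sn_transpose: "norm (transpose M *v x) \<le> spec_norm M * norm (x::real^'p)"
  for M :: "real^'q^'p"
proof -
  define w where "w = transpose M *v x"
  have "w \<bullet> w = x \<bullet> (M *v w)"
    unfolding w_def by (metis dot_lmul_matrix transpose_matrix_vector)
  also have "\<dots> \<le> norm x * norm (M *v w)" by (rule norm_cauchy_schwarz)
  also have "\<dots> \<le> norm x * (spec_norm M * norm w)"
    by (intro mult_left_mono sn_bound) auto
  finally have *: "norm w * norm w \<le> norm w * (spec_norm M * norm x)"
    by (simp add: dot_square_norm power2_eq_square mult_ac)
  show ?thesis
  proof (cases "w = 0")
    case True then show ?thesis unfolding w_def using sn_nonneg[of M] by simp
  next
    case False then show ?thesis using * unfolding w_def by simp
  qed
qed

lemma sn_bilin: "\<bar>a \<bullet> (M *v b)\<bar> \<le> spec_norm M * norm a * norm (b::real^'q)"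
  for M :: "real^'q^'p"
proof -
  have "\<bar>a \<bullet> (M *v b)\<bar> \<le> norm a * norm (M *v b)" by (rule Cauchy_Schwarz_ineq2)
  also have "\<dots> \<le> norm a * (spec_norm M * norm b)" by (intro mult_left_mono sn_bound) auto
  finally show ?thesis by (simp add: mult_ac)
qed

lemma qf_mul:
  fixes Y :: "real^'k^'n" and N :: "real^'k^'k"
  shows "x \<bullet> ((Y ** N ** transpose Y) *v x) = (transpose Y *v x) \<bullet> (N *v (transpose Y *v x))"
  by (metis dot_lmul_matrix matrix_vector_mul_assoc transpose_matrix_vector)

lemma sigma_bound:
  fixes Gm :: "real^'q^'p"
  assumes card: "CARD('p) \<le> CARD('q)"
  shows "0 \<le> sigma_min Gm \<and> (\<forall>y. sigma_min Gm * norm y \<le> norm (transpose Gm *v y))"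
proof -
  define S where "S = Gm ** transpose Gm"
  have Ssym: "transpose S = S" unfolding S_def by (simp add: matrix_transpose_mul)
  have Sq: "y \<bullet> (S *v y) = (norm (transpose Gm *v y))^2" for y
    using qf_mul[of y Gm "mat 1"] unfolding S_def by (simp add: dot_square_norm)
  obtain r where r: "r \<in> real_eigenvalues S" "\<And>y. r * (y \<bullet> y) \<le> y \<bullet> (S *v y)"
    using rayleigh[OF Ssym] by blast
  have fin: "finite (real_eigenvalues S)"
    unfolding real_eigenvalues_def by (rule eig_finite)
  define lm where "lm = Min (real_eigenvalues S)"
  have lmin: "lm \<in> real_eigenvalues S" unfolding lm_def using fin r(1) by (intro Min_in) auto
  have lmr: "lm \<le> r" unfolding lm_def using fin r(1) by simp
  have lm0: "0 \<le> lm"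
  proof -
    obtain v where v: "v \<noteq> 0" "S *v v = lm *s v" using lmin unfolding real_eigenvalues_def by blast
    have "lm * (v \<bullet> v) = v \<bullet> (S *v v)" using v(2) by (simp add: scalar_mult_eq_scaleR)
    also have "\<dots> \<ge> 0" using Sq by simp
    finally have "0 \<le> lm * (v \<bullet> v)" .
    moreover have "v \<bullet> v > 0" using v(1) by simp
    ultimately show ?thesis by (simp add: zero_le_mult_iff)
  qed
  have sm: "sigma_min Gm = sqrt lm" unfolding sigma_min_def lm_def S_def using card by simp
  have "sigma_min Gm * norm y \<le> norm (transpose Gm *v y)" for y
  proof -
    have "(sigma_min Gm * norm y)^2 = lm * (y \<bullet> y)"
      using lm0 by (simp add: sm power_mult_distrib dot_square_norm)
    also have "\<dots> \<le> r * (y \<bullet> y)" using lmr by (intro mult_right_mono) auto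
    also have "\<dots> \<le> (norm (transpose Gm *v y))^2" using r(2) Sq by metis
    finally show ?thesis
      by (rule power2_le_imp_le) simp
  qed
  then show ?thesis using sm lm0 by simp
qed

lemma vstack_add: "vstack (A1 + A2) (B1 + B2) = vstack A1 B1 + vstack A2 B2"
  by (simp add: vstack_def vec_eq_iff split: sum.split)

definition hcat :: "real^'p1^'n \<Rightarrow> real^'p2^'n \<Rightarrow> real^('p1 + 'p2)^'n" where
  "hcat M1 M2 = (\<chi> i j. case j of Inl a \<Rightarrow> M1 $ i $ a | Inr b \<Rightarrow> M2 $ i $ b)"

lemma hcat_vstack: "hcat B A ** vstack M1 M2 = B ** M1 + A ** M2"
  by (simp add: vec_eq_iff matrix_matrix_mult_def hcat_def vstack_def
      UNIV_Plus_UNIV[symmetric] sum.Plus del: UNIV_Plus_UNIV)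

lemma loew_feas:
  fixes E P :: "real^'n^'n"
  assumes "loewner_le (E - P + mat 1) 0"
  shows "x \<bullet> (E *v x) \<le> x \<bullet> (P *v x) - x \<bullet> x"
proof -
  have "0 \<le> x \<bullet> ((0 - (E - P + mat 1)) *v x)" using assms unfolding loewner_le_def psd_def by blast
  then show ?thesis
    by (simp add: matrix_vector_mult_diff_rdistrib matrix_vector_mult_add_rdistrib inner_diff_right inner_add_right)
qed

lemma loew_P:
  fixes P :: "real^'n^'n"
  assumes "loewner_le (mat 1) P"
  shows "x \<bullet> x \<le> x \<bullet> (P *v x)"
proof -
  have "0 \<le> x \<bullet> ((P - mat 1) *v x)" using assms unfolding loewner_le_def psd_def by blast
  then show ?thesis
    by (simp add: matrix_vector_mult_diff_rdistrib inner_diff_right)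
qed



lemma bil_le:
  fixes M :: "real^'k^'k"
  assumes "norm p \<le> PP" "norm q \<le> QQ"
  shows "\<bar>p \<bullet> (M *v q)\<bar> \<le> spec_norm M * PP * QQ"
proof -
  have "\<bar>p \<bullet> (M *v q)\<bar> \<le> spec_norm M * norm p * norm q" by (rule sn_bilin)
  also have "\<dots> \<le> spec_norm M * PP * QQ"
  proof -
    have P0: "0 \<le> PP" using assms(1) norm_ge_zero order_trans by blast
    show ?thesis
      using assms sn_nonneg[of M] P0 by (intro mult_mono) (auto intro: mult_left_mono)
  qed
  finally show ?thesis .
qed

lemma quad_expand2:
  fixes M :: "real^'k^'k"
  shows "(u + d) \<bullet> (M *v (u + d)) = u \<bullet> (M *v u) + u \<bullet> (M *v d) + d \<bullet> (M *v u) + d \<bullet> (M *v d)"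
  by (simp add: matrix_vector_right_distrib inner_add_left inner_add_right)

lemma quad_diff:
  fixes M :: "real^'k^'k"
  assumes u: "norm u \<le> z * nx" and d1: "norm d1 \<le> z * s * nx" and d2: "norm d2 \<le> z * s * nx"
  shows "(u + d1) \<bullet> (M *v (u + d1)) - (u + d2) \<bullet> (M *v (u + d2))
     \<le> spec_norm M * z^2 * nx^2 * (4 * s + 2 * s^2)"
proof -
  let ?m = "spec_norm M"
  have b1: "\<bar>u \<bullet> (M *v d1)\<bar> \<le> ?m * (z * nx) * (z * s * nx)" by (rule bil_le[OF u d1])
  have b2: "\<bar>d1 \<bullet> (M *v u)\<bar> \<le> ?m * (z * s * nx) * (z * nx)" by (rule bil_le[OF d1 u])
  have b3: "\<bar>d1 \<bullet> (M *v d1)\<bar> \<le> ?m * (z * s * nx) * (z * s * nx)" by (rule bil_le[OF d1 d1])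
  have b4: "\<bar>u \<bullet> (M *v d2)\<bar> \<le> ?m * (z * nx) * (z * s * nx)" by (rule bil_le[OF u d2])
  have b5: "\<bar>d2 \<bullet> (M *v u)\<bar> \<le> ?m * (z * s * nx) * (z * nx)" by (rule bil_le[OF d2 u])
  have b6: "\<bar>d2 \<bullet> (M *v d2)\<bar> \<le> ?m * (z * s * nx) * (z * s * nx)" by (rule bil_le[OF d2 d2])
  have eq: "?m * z^2 * nx^2 * (4 * s + 2 * s^2) = 
     ?m * (z * nx) * (z * s * nx) + ?m * (z * s * nx) * (z * nx) + ?m * (z * s * nx) * (z * s * nx)
     + ?m * (z * nx) * (z * s * nx) + ?m * (z * s * nx) * (z * nx) + ?m * (z * s * nx) * (z * s * nx)"
    by (simp add: power2_eq_square algebra_simps)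
  show ?thesis unfolding quad_expand2 eq using b1 b2 b3 b4 b5 b6 by linarith
qed

lemma transpose_map_matrix: "transpose (map_matrix f F) = map_matrix f (transpose F)"
  by (simp add: vec_eq_iff transpose_def)

lemma complex_parts:
  fixes Ft :: "real^'n^'n" and w :: "complex^'n"
  assumes e: "map_matrix complex_of_real Ft *v w = l *s w"
  shows "Ft *v (\<chi> i. Re (w$i)) = Re l *\<^sub>R (\<chi> i. Re (w$i)) - Im l *\<^sub>R (\<chi> i. Im (w$i))"
    and "Ft *v (\<chi> i. Im (w$i)) = Im l *\<^sub>R (\<chi> i. Re (w$i)) + Re l *\<^sub>R (\<chi> i. Im (w$i))"
proof -
  have c: "(\<Sum>j\<in>UNIV. complex_of_real (Ft$i$j) * w$j) = l * w$i" for i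
    using e by (simp add: vec_eq_iff matrix_vector_mult_def)
  show "Ft *v (\<chi> i. Re (w$i)) = Re l *\<^sub>R (\<chi> i. Re (w$i)) - Im l *\<^sub>R (\<chi> i. Im (w$i))"
  proof -
    have "(\<Sum>j\<in>UNIV. Ft$i$j * Re (w$j)) = Re l * Re (w$i) - Im l * Im (w$i)" for i
      using arg_cong[OF c[of i], of Re] by (simp add: Re_sum)
    then show ?thesis by (simp add: vec_eq_iff matrix_vector_mult_def)
  qed
  show "Ft *v (\<chi> i. Im (w$i)) = Im l *\<^sub>R (\<chi> i. Re (w$i)) + Re l *\<^sub>R (\<chi> i. Im (w$i))"
  proof -
    have "(\<Sum>j\<in>UNIV. Ft$i$j * Im (w$j)) = Im l * Re (w$i) + Re l * Im (w$i)" for i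
      using arg_cong[OF c[of i], of Im] by (simp add: Im_sum)
    then show ?thesis by (simp add: vec_eq_iff matrix_vector_mult_def)
  qed
qed

lemma herm:
  fixes P :: "real^'n^'n"
  assumes sym: "transpose P = P"
  shows "(p *\<^sub>R a - q *\<^sub>R b) \<bullet> (P *v (p *\<^sub>R a - q *\<^sub>R b)) + (q *\<^sub>R a + p *\<^sub>R b) \<bullet> (P *v (q *\<^sub>R a + p *\<^sub>R b))
    = (p^2 + q^2) * (a \<bullet> (P *v a) + b \<bullet> (P *v b))"
  using sym_dot[OF sym, of a b]
  by (simp add: matrix_vector_mult_diff_distrib matrix_vector_right_distrib matrix_vector_mult_scaleR
      inner_add_left inner_add_right inner_diff_left inner_diff_right power2_eq_square algebra_simps)



theorem proposition6:
  fixes A :: "real^'n^'n" and B :: "real^'m^'n"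
    and Z X :: "real^'t^'n" and U :: "real^'t^'m"
    and Q :: "real^'n^'n" and R :: "real^'m^'m" and \<gamma> :: real
    and DZ DX :: "real^'t^'n" and DU :: "real^'t^'m"
    and P :: "real^'n^'n" and K :: "real^'n^'m" and G :: "real^'n^'t"
  assumes Q: "symmetric Q" "psd Q"
    and R: "symmetric R" "pos_def R"
    and gam: "\<gamma> \<ge> 0"
    and rank: "rank (vstack U X) = CARD('m + 'n)"
    and sys: "Z = A ** X + B ** U"
    and opt: "RP_optimal Q R \<gamma> (Z + DZ) (X + DX) (U + DU) P K G"
    and mu: "SPR Z X U DZ DX DU >
      ereal (inverse (-1 + sqrt (1 + 1 / (2 * (spec_norm Z)^2
                 * spec_norm (G ** P ** transpose G)))))"
  shows "spectral_radius (A + B ** K) < 1"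
proof -
  define Gm where "Gm = vstack U X"
  define DG where "DG = vstack DU DX"
  define W where "W = hcat B A"
  define M where "M = G ** P ** transpose G"
  define F where "F = A + B ** K"
  define D1 where "D1 = W ** DG"
  define m where "m = SPR Z X U DZ DX DU"
  define z where "z = spec_norm Z"
  define sM where "sM = spec_norm M"
  define cc where "cc = 1 / (2 * z^2 * sM)"
  define c0 where "c0 = inverse (-1 + sqrt (1 + cc))"
  have z0: "0 \<le> z" unfolding z_def by (rule sn_nonneg)
  have sM0: "0 \<le> sM" unfolding sM_def by (rule sn_nonneg)
  have cc0: "0 \<le> cc" unfolding cc_def using z0 sM0 by simp
  have mgt: "m > ereal c0" using mu unfolding m_def c0_def cc_def z_def sM_def M_def .
  have c00: "0 \<le> c0" unfolding c0_def using cc0 by simp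
  have m0: "m > 0" using mgt c00
    by (metis ereal_less_eq(3) le_less_trans zero_ereal_def)
  define s where "s = (if m = \<infinity> then 0 else 1 / real_of_ereal m)"
  have s0: "0 \<le> s" unfolding s_def using m0
    by (simp add: real_of_ereal_pos less_imp_le)
  have ratio: "b \<le> a * s" if b0: "0 \<le> b" and a0: "0 \<le> a" and le: "m \<le> eratio a b" for a b
  proof (cases "b = 0")
    case True then show ?thesis using a0 s0 by simp
  next
    case False
    then have le': "m \<le> ereal (a / b)" using le unfolding eratio_def by simp
    then obtain r where r: "m = ereal r" using m0
      by (cases m) auto
    have r0: "0 < r" using m0 r by simp
    have "r \<le> a / b" using le' r by simp
    then have "r * b \<le> a" using False b0 by (simp add: pos_le_divide_eq)
    then have "b \<le> a / r" using r0 by (simp add: pos_le_divide_eq mult.commute)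
    then show ?thesis unfolding s_def using r by simp
  qed
  have card: "CARD('m + 'n) \<le> CARD('t)"
    using rank_bound[of "vstack U X"] rank by simp
  have sig: "0 \<le> sigma_min Gm" "\<And>y. sigma_min Gm * norm y \<le> norm (transpose Gm *v y)"
    using sigma_bound[OF card, of Gm] by auto
  have hZ: "spec_norm DZ \<le> z * s"
    unfolding z_def by (rule ratio) (auto simp: sn_nonneg m_def SPR_def)
  have hG: "spec_norm DG \<le> sigma_min Gm * s"
    by (rule ratio) (use sig(1) in \<open>auto simp: sn_nonneg m_def SPR_def Gm_def DG_def\<close>)
  have feas: "symmetric P" "loewner_le ((Z + DZ) ** G ** P ** transpose G ** transpose (Z + DZ) - P + mat 1) 0"
      "loewner_le (mat 1) P" "vstack K (mat 1) = vstack (U + DU) (X + DX) ** G"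
    using opt unfolding RP_optimal_def RP_feasible_def by auto
  have Psym: "transpose P = P" using feas(1) unfolding symmetric_def .
  have ZW: "Z = W ** Gm"
    unfolding W_def Gm_def hcat_vstack sys by (simp add: add.commute)
  have FG: "F = (Z + D1) ** G"
  proof -
    have "F = W ** vstack K (mat 1)" unfolding F_def W_def hcat_vstack by (simp add: add.commute)
    also have "\<dots> = W ** (vstack (U + DU) (X + DX) ** G)" using feas(4) by simp
    also have "\<dots> = (W ** (Gm + DG)) ** G" unfolding Gm_def DG_def vstack_add by (simp add: matrix_mul_assoc)
    also have "\<dots> = (Z + D1) ** G" unfolding ZW D1_def by (simp add: matrix_add_ldistrib)
    finally show ?thesis .
  qed
  have Wt: "sigma_min Gm * norm (transpose W *v x) \<le> z * norm x" for x
  proof -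
    have "transpose Gm *v (transpose W *v x) = transpose Z *v x"
      unfolding ZW by (metis matrix_vector_mul_assoc matrix_transpose_mul)
    then show ?thesis using sig(2)[of "transpose W *v x"] sn_transpose[of Z x] unfolding z_def by simp
  qed
  have bd1: "norm (transpose D1 *v x) \<le> z * s * norm x" for x
  proof -
    have "transpose D1 *v x = transpose DG *v (transpose W *v x)"
      unfolding D1_def by (metis matrix_vector_mul_assoc matrix_transpose_mul)
    then have "norm (transpose D1 *v x) \<le> spec_norm DG * norm (transpose W *v x)"
      using sn_transpose by metis
    also have "\<dots> \<le> sigma_min Gm * s * norm (transpose W *v x)"
      using hG by (intro mult_right_mono) auto
    also have "\<dots> = s * (sigma_min Gm * norm (transpose W *v x))" by simp
    also have "\<dots> \<le> s * (z * norm x)" using Wt s0 by (intro mult_left_mono) auto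
    finally show ?thesis by (simp add: mult_ac)
  qed
  have bd2: "norm (transpose DZ *v x) \<le> z * s * norm x" for x
  proof -
    have "norm (transpose DZ *v x) \<le> spec_norm DZ * norm x" by (rule sn_transpose)
    also have "\<dots> \<le> z * s * norm x" using hZ by (intro mult_right_mono) auto
    finally show ?thesis .
  qed
  have bu: "norm (transpose Z *v x) \<le> z * norm x" for x
    unfolding z_def by (rule sn_transpose)
  define kap where "kap = sM * z^2 * (4 * s + 2 * s^2)"
  have key: "x \<bullet> ((F ** P ** transpose F) *v x) \<le> x \<bullet> (P *v x) - (1 - kap) * (x \<bullet> x)" for x
  proof -
    have e1: "F ** P ** transpose F = (Z + D1) ** M ** transpose (Z + D1)"
      unfolding FG M_def by (simp add: matrix_transpose_mul matrix_mul_assoc)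
    have e2: "(Z + DZ) ** G ** P ** transpose G ** transpose (Z + DZ) = (Z + DZ) ** M ** transpose (Z + DZ)"
      unfolding M_def by (simp add: matrix_mul_assoc)
    have q1: "x \<bullet> ((F ** P ** transpose F) *v x) = (transpose Z *v x + transpose D1 *v x) \<bullet> (M *v (transpose Z *v x + transpose D1 *v x))"
      unfolding e1 qf_mul by (simp add: transpose_add matrix_vector_mult_add_rdistrib)
    have q2: "x \<bullet> (((Z + DZ) ** G ** P ** transpose G ** transpose (Z + DZ)) *v x) = (transpose Z *v x + transpose DZ *v x) \<bullet> (M *v (transpose Z *v x + transpose DZ *v x))"
      unfolding e2 qf_mul by (simp add: transpose_add matrix_vector_mult_add_rdistrib)
    have "x \<bullet> ((F ** P ** transpose F) *v x) - x \<bullet> (((Z + DZ) ** G ** P ** transpose G ** transpose (Z + DZ)) *v x)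
        \<le> sM * z^2 * (norm x)^2 * (4 * s + 2 * s^2)"
      unfolding q1 q2 sM_def by (rule quad_diff[OF bu bd1 bd2])
    moreover have "x \<bullet> (((Z + DZ) ** G ** P ** transpose G ** transpose (Z + DZ)) *v x) \<le> x \<bullet> (P *v x) - x \<bullet> x"
      by (rule loew_feas[OF feas(2)])
    moreover have "(norm x)^2 = x \<bullet> x" by (simp add: power2_norm_eq_inner)
    ultimately show ?thesis unfolding kap_def by (simp add: algebra_simps)
  qed
  have kap1: "kap < 1"
  proof (cases "z = 0 \<or> sM = 0")
    case True then show ?thesis unfolding kap_def by auto
  next
    case False
    then have zp: "0 < z" and sp: "0 < sM" using z0 sM0 by auto
    have ccp: "0 < cc" unfolding cc_def using zp sp by simp
    have sq: "1 < sqrt (1 + cc)" using ccp by simp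
    have c0p: "0 < c0" unfolding c0_def using sq by simp
    have "2 * s + s^2 < cc"
    proof (cases "m = \<infinity>")
      case True then show ?thesis unfolding s_def using ccp by simp
    next
      case False
      then obtain r where r: "m = ereal r" using m0 by (cases m) auto
      have rc: "c0 < r" using mgt r by simp
      have "s = 1 / r" unfolding s_def using r by simp
      also have "\<dots> < 1 / c0" using rc c0p by (intro divide_strict_left_mono) auto
      also have "\<dots> = sqrt (1 + cc) - 1" unfolding c0_def by (simp add: divide_inverse)
      finally have "1 + s < sqrt (1 + cc)" by simp
      then have "(1 + s)^2 < (sqrt (1 + cc))^2" using s0 by (intro power_strict_mono) auto
      then show ?thesis using cc0 by (simp add: power2_eq_square algebra_simps)
    qed
    then have "2 * sM * z^2 * (2 * s + s^2) < 2 * sM * z^2 * cc"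
      using zp sp by (intro mult_strict_left_mono) auto
    also have "\<dots> = 1" unfolding cc_def using zp sp by simp
    finally show ?thesis unfolding kap_def by (simp add: algebra_simps)
  qed
  have eig: "cmod l < 1" if l: "l \<in> complex_eigenvalues F" for l
  proof -
    obtain v where v: "v \<noteq> 0" "map_matrix complex_of_real F *v v = l *s v"
      using l unfolding complex_eigenvalues_def by blast
    obtain w where w: "w \<noteq> 0" "map_matrix complex_of_real (transpose F) *v w = l *s w"
      using eig_transpose[OF v] unfolding transpose_map_matrix by blast
    define a where "a = (\<chi> i. Re (w$i))"
    define b where "b = (\<chi> i. Im (w$i))"
    have Fa: "transpose F *v a = Re l *\<^sub>R a - Im l *\<^sub>R b"
      using complex_parts(1)[OF w(2)] unfolding a_def b_def .
    have Fb: "transpose F *v b = Im l *\<^sub>R a + Re l *\<^sub>R b"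
      using complex_parts(2)[OF w(2)] unfolding a_def b_def .
    define H where "H = a \<bullet> (P *v a) + b \<bullet> (P *v b)"
    define N where "N = a \<bullet> a + b \<bullet> b"
    have QH: "a \<bullet> ((F ** P ** transpose F) *v a) + b \<bullet> ((F ** P ** transpose F) *v b) = ((Re l)^2 + (Im l)^2) * H"
      unfolding qf_mul Fa Fb H_def by (rule herm[OF Psym])
    have N0: "0 < N"
    proof -
      obtain i where "w$i \<noteq> 0" using w(1) by (metis vec_eq_iff zero_index)
      then have "a \<noteq> 0 \<or> b \<noteq> 0" unfolding a_def b_def
        by (metis complex_eqI vec_lambda_beta zero_complex.simps zero_index)
      then show ?thesis unfolding N_def
        by (metis add_nonneg_pos add_pos_nonneg inner_ge_zero inner_gt_zero_iff)
    qed
    have HN: "N \<le> H" unfolding N_def H_def using loew_P[OF feas(3), of a] loew_P[OF feas(3), of b] by simp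
    have "((Re l)^2 + (Im l)^2) * H \<le> H - (1 - kap) * N"
    proof -
      have dN: "(1 - kap) * N = (1 - kap) * (a \<bullet> a) + (1 - kap) * (b \<bullet> b)"
        unfolding N_def by (simp add: algebra_simps)
      show ?thesis using key[of a] key[of b] QH dN unfolding H_def by linarith
    qed
    also have "\<dots> < H" using kap1 N0 by simp
    finally have lt: "((Re l)^2 + (Im l)^2) * H < H" .
    have "(Re l)^2 + (Im l)^2 < 1"
    proof (rule ccontr)
      assume "\<not> ?thesis"
      then have "1 * H \<le> ((Re l)^2 + (Im l)^2) * H" using HN N0 by (intro mult_right_mono) auto
      then show False using lt by simp
    qed
    then have "(cmod l)^2 < 1" by (simp add: cmod_power2)
    then show ?thesis by (simp add: power_less_one_iff abs_square_less_1)
  qed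
  have fin: "finite (complex_eigenvalues F)"
    unfolding complex_eigenvalues_def by (rule eig_finite)
  have ne: "complex_eigenvalues F \<noteq> {}"
    unfolding complex_eigenvalues_def using eig_exists by blast
  show ?thesis
    unfolding F_def[symmetric] spectral_radius_def using fin ne eig
    by (simp add: Max_less_iff)
qed

end
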